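(* Let $\tilde C=(c_{nm}-c_{mn})_{n,m}$. Suppose there is a sequence of distinct nodes $n_1,\dots,n_k$ with $k>2$, such that $n_{i+1}\in\Omega_{n_i}$ for all $i$ (where $n_{k+1}:=n_1$), and $\sum_{i=1}^k\tilde C_{n_i,n_{i+1}}<0$. Then at every optimal solution of the centralized problem (P) there exists $i\in\{1,\dots,k\}$ with $q_{n_{i+1},n_i}=\kappa_{n_{i+1},n_i}$. Symmetrically, if $\sum_{i=1}^k\tilde C_{n_i,n_{i+1}}>0$, then at every optimal solution of (P) there exists $i$ with $q_{n_i,n_{i+1}}=\kappa_{n_i,n_{i+1}}$.
   Context: Model. $\mathcal N$ is a finite set of nodes (agents) containing a root node $0$. Each node $n$ has a neighborhood $\Omega_n\subseteq\mathcal N$ with $n\in\Omega_n$; the neighbor relation is symmetric ($m\in\Omega_n\iff n\in\Omega_m$) and every node is a neighbor of the root. Decision variables: demand $D_n$, flexibility activation $G_n$, and for each $m\in\Omega_n\setminus\{n\}$ a trade $q_{mn}\in\mathbb R$ (quantity sent from $m$ to $n$; $q_{mn}>0$ means $n$ buys from $m$). The net import of $n$ is $Q_n=\sum_{m\in\Omega_n\setminus\{n\}}q_{mn}$. Parameters: $0\le\underline D_n\le\overline D_n$, $0\le\underline G_n\le\overline G_n$, capacities $\kappa_{nm}=\kappa_{mn}\in[0,\infty)$, exogenous renewable generation $\Delta G_n$, constants $a_n,b_n,d_n>0$, $\tilde a_n,\tilde b_n>0$, target demand $D_n^\star$, preference prices $c_{nm}>0$. Costs/utilities: $C_n(G)=\tfrac12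 a_nG^2+b_nG+d_n$, $U_n(D)=-\tilde a_n(D-D_n^\star)^2+\tilde b_n$, $\tilde C_n(\mathbf q_n)=\sum_{m\in\Omega_n\setminus\{n\}}c_{nm}q_{mn}$, $\Pi_n=U_n(D_n)-C_n(G_n)-\tilde C_n(\mathbf q_n)$, $SW=\sum_{n\in\mathcal N}\Pi_n$. Centralized problem (P): maximize $SW$ over $(\mathbf D,\mathbf G,\mathbf q)$ subject to (1) $\underline D_n\le D_n\le\overline D_n$; (2) $\underline G_n\le G_n\le\overline G_n$; (3) $q_{mn}\le\kappa_{mn}$ for all $n$ and $m\in\Omega_n\setminus\{n\}$; (4) $q_{mn}+q_{nm}\le0$ for each pair of distinct neighbors; (5) $D_n=G_n+\Delta G_n+Q_n$ for all $n$. *)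

theory Defs
  imports Main "HOL.Real"
begin

text \<open>Net import of node n: Q_n = sum over neighbours m (m \<noteq> n) of q m n,
  where q m n is the quantity sent from m to n.\<close>
definition net_import :: "('a \<Rightarrow> 'a set) \<Rightarrow> ('a \<Rightarrow> 'a \<Rightarrow> real) \<Rightarrow> 'a \<Rightarrow> real" where
  "net_import \<Omega> q n = (\<Sum>m\<in>\<Omega> n - {n}. q m n)"

definition gen_cost :: "real \<Rightarrow> real \<Rightarrow> real \<Rightarrow> real \<Rightarrow> real" where
  "gen_cost a b d G = a * G\<^sup>2 / 2 + b * G + d"

definition utility :: "real \<Rightarrow> real \<Rightarrow> real \<Rightarrow> real \<Rightarrow> real" where
  "utility at bt Dstar D = - at * (D - Dstar)\<^sup>2 + bt"

definition trade_cost :: "('a \<Rightarrow> 'a set) \<Rightarrow> ('a \<Rightarrow> 'a \<Rightarrow> real) \<Rightarrow> ('a \<Rightarrow> 'a \<Rightarrow> real) \<Rightarrow> 'a \<Rightarrow> real" where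
  "trade_cost \<Omega> c q n = (\<Sum>m\<in>\<Omega> n - {n}. c n m * q m n)"

definition social_welfare ::
  "'a set \<Rightarrow> ('a \<Rightarrow> 'a set) \<Rightarrow> ('a \<Rightarrow> real) \<Rightarrow> ('a \<Rightarrow> real) \<Rightarrow> ('a \<Rightarrow> real) \<Rightarrow>
   ('a \<Rightarrow> real) \<Rightarrow> ('a \<Rightarrow> real) \<Rightarrow> ('a \<Rightarrow> real) \<Rightarrow> ('a \<Rightarrow> 'a \<Rightarrow> real) \<Rightarrow>
   ('a \<Rightarrow> real) \<Rightarrow> ('a \<Rightarrow> real) \<Rightarrow> ('a \<Rightarrow> 'a \<Rightarrow> real) \<Rightarrow> real" where
  "social_welfare N \<Omega> a b d at bt Dstar c D G q =
     (\<Sum>n\<in>N. utility (at n) (bt n) (Dstar n) (D n) - gen_cost (a n) (b n) (d n) (G n)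
              - trade_cost \<Omega> c q n)"

definition feasible ::
  "'a set \<Rightarrow> ('a \<Rightarrow> 'a set) \<Rightarrow> ('a \<Rightarrow> real) \<Rightarrow> ('a \<Rightarrow> real) \<Rightarrow> ('a \<Rightarrow> real) \<Rightarrow> ('a \<Rightarrow> real) \<Rightarrow>
   ('a \<Rightarrow> 'a \<Rightarrow> real) \<Rightarrow> ('a \<Rightarrow> real) \<Rightarrow>
   ('a \<Rightarrow> real) \<Rightarrow> ('a \<Rightarrow> real) \<Rightarrow> ('a \<Rightarrow> 'a \<Rightarrow> real) \<Rightarrow> bool" where
  "feasible N \<Omega> Dlo Dhi Glo Ghi \<kappa> \<Delta>G D G q \<longleftrightarrow>
     (\<forall>n\<in>N. Dlo n \<le> D n \<and> D n \<le> Dhi n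
          \<and> Glo n \<le> G n \<and> G n \<le> Ghi n
          \<and> (\<forall>m\<in>\<Omega> n - {n}. q m n \<le> \<kappa> m n \<and> q m n + q n m \<le> 0)
          \<and> D n = G n + \<Delta>G n + net_import \<Omega> q n)"

definition optimal_P ::
  "'a set \<Rightarrow> ('a \<Rightarrow> 'a set) \<Rightarrow> ('a \<Rightarrow> real) \<Rightarrow> ('a \<Rightarrow> real) \<Rightarrow> ('a \<Rightarrow> real) \<Rightarrow> ('a \<Rightarrow> real) \<Rightarrow>
   ('a \<Rightarrow> 'a \<Rightarrow> real) \<Rightarrow> ('a \<Rightarrow> real) \<Rightarrow>
   ('a \<Rightarrow> real) \<Rightarrow> ('a \<Rightarrow> real) \<Rightarrow> ('a \<Rightarrow> real) \<Rightarrow> ('a \<Rightarrow> real) \<Rightarrow> ('a \<Rightarrow> real) \<Rightarrow>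
   ('a \<Rightarrow> real) \<Rightarrow> ('a \<Rightarrow> 'a \<Rightarrow> real) \<Rightarrow>
   ('a \<Rightarrow> real) \<Rightarrow> ('a \<Rightarrow> real) \<Rightarrow> ('a \<Rightarrow> 'a \<Rightarrow> real) \<Rightarrow> bool" where
  "optimal_P N \<Omega> Dlo Dhi Glo Ghi \<kappa> \<Delta>G a b d at bt Dstar c D G q \<longleftrightarrow>
     feasible N \<Omega> Dlo Dhi Glo Ghi \<kappa> \<Delta>G D G q \<and>
     (\<forall>D' G' q'. feasible N \<Omega> Dlo Dhi Glo Ghi \<kappa> \<Delta>G D' G' q' \<longrightarrow>
        social_welfare N \<Omega> a b d at bt Dstar c D' G' q' \<le>
        social_welfare N \<Omega> a b d at bt Dstar c D G q)"

end

theory Submission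
  imports Defs
begin

lemma sum_delta2:
  assumes "finite N" "\<And>n. n \<in> N \<Longrightarrow> finite (B n)"
  shows "(\<Sum>n\<in>N. \<Sum>m\<in>B n. (if m = x \<and> n = y then h n m else (0::real)))
       = (if y \<in> N \<and> x \<in> B y then h y x else 0)"
proof -
  have "(\<Sum>n\<in>N. \<Sum>m\<in>B n. (if m = x \<and> n = y then h n m else (0::real)))
      = (\<Sum>n\<in>N. if n = y then (if x \<in> B n then h n x else 0) else 0)"
  proof (intro sum.cong refl)
    fix n assume "n \<in> N"
    show "(\<Sum>m\<in>B n. (if m = x \<and> n = y then h n m else (0::real)))
        = (if n = y then (if x \<in> B n then h n x else 0) else 0)"
      using assms \<open>n \<in> N\<close> by (cases "n = y") (auto simp: sum.delta')
  qed
  also have "\<dots> = (if y \<in> N \<and> x \<in> B y then h y x else 0)"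
    using assms by (simp add: sum.delta')
  finally show ?thesis .
qed

lemma mult_if01: "(c::real) * (if P then 1 else 0) = (if P then c else 0)"
  by simp

lemma sum_delta1:
  assumes "finite A"
  shows "(\<Sum>m\<in>A. (if m = x \<and> P then (1::real) else 0)) = (if P \<and> x \<in> A then 1 else 0)"
  using assms by (cases P) (auto simp: sum.delta')

lemma sum_rot: "(k::nat) > 0 \<Longrightarrow> (\<Sum>i<k. f (Suc i mod k)) = (\<Sum>i<k. (f i::real))"
proof -
  assume "k > 0" then obtain k' where k: "k = Suc k'" by (cases k) auto
  have "(\<Sum>i<Suc k'. f (Suc i mod Suc k')) = (\<Sum>i<k'. f (Suc i mod Suc k')) + f 0" by simp
  also have "(\<Sum>i<k'. f (Suc i mod Suc k')) = (\<Sum>i<k'. f (Suc i))" by (intro sum.cong) auto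
  also have "\<dots> + f 0 = (\<Sum>i<Suc k'. f i)" by (metis add.commute sum.lessThan_Suc_shift)
  finally show ?thesis using k by simp
qed

lemma perturb:
  fixes N :: "'a set" and \<Omega> :: "'a \<Rightarrow> 'a set"
    and s :: "nat \<Rightarrow> 'a" and k :: nat and t :: real
  assumes finN: "finite N"
    and Omega_sub: "\<And>n. n \<in> N \<Longrightarrow> \<Omega> n \<subseteq> N"
    and Omega_sym: "\<And>n m. n \<in> N \<Longrightarrow> m \<in> N \<Longrightarrow> m \<in> \<Omega> n \<longleftrightarrow> n \<in> \<Omega> m"
    and k_gt: "k > 2"
    and s_in: "\<And>i. i < k \<Longrightarrow> s i \<in> N"
    and s_distinct: "inj_on s {..<k}"
    and s_adj: "\<And>i. i < k \<Longrightarrow> s (Suc i mod k) \<in> \<Omega> (s i)"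
    and opt: "optimal_P N \<Omega> Dlo Dhi Glo Ghi \<kappa> \<Delta>G a b d at bt Dstar c D G q"
    and dl: "\<delta> = (\<lambda>m n. \<Sum>i<k. (if m = s (Suc i mod k) \<and> n = s i then 1 else 0)
                            - (if m = s i \<and> n = s (Suc i mod k) then (1::real) else 0))"
    and cap: "\<And>n m. n \<in> N \<Longrightarrow> m \<in> \<Omega> n - {n} \<Longrightarrow> q m n + t * \<delta> m n \<le> \<kappa> m n"
  shows "t * (\<Sum>i<k. c (s i) (s (Suc i mod k)) - c (s (Suc i mod k)) (s i)) \<ge> 0"
proof -
  define q' where "q' = (\<lambda>m n. q m n + t * \<delta> m n)"
  define A where "A = (\<lambda>n. \<Omega> n - {n})"
  have finA: "\<And>n. n \<in> N \<Longrightarrow> finite (A n)"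
    using finN Omega_sub unfolding A_def by (meson finite_Diff finite_subset)
  have k0: "k > 0" using k_gt by simp
  have neq: "s (Suc i mod k) \<noteq> s i" if "i < k" for i
  proof
    assume "s (Suc i mod k) = s i"
    then have "Suc i mod k = i" using s_distinct that k0 by (auto dest: inj_onD)
    moreover have "Suc i < k \<or> Suc i = k" using that by linarith
    ultimately show False using k_gt by auto
  qed
  have inA1: "s (Suc i mod k) \<in> A (s i)" if "i < k" for i
    using s_adj[OF that] neq[OF that] unfolding A_def by auto
  have inA2: "s i \<in> A (s (Suc i mod k))" if "i < k" for i
  proof -
    have "s (Suc i mod k) \<in> N" using s_in k0 by simp
    then show ?thesis using s_adj[OF that] neq[OF that] Omega_sym s_in[OF that] unfolding A_def by auto
  qed
  have dsum: "(\<Sum>m\<in>A n. \<delta> m n) = 0" if n: "n \<in> N" for n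
  proof -
    have "(\<Sum>m\<in>A n. \<delta> m n) = (\<Sum>i<k. (\<Sum>m\<in>A n. (if m = s (Suc i mod k) \<and> n = s i then 1 else 0))
                     - (\<Sum>m\<in>A n. (if m = s i \<and> n = s (Suc i mod k) then (1::real) else 0)))"
      unfolding dl by (simp add: sum.swap[of _ "A n"] sum_subtractf)
    also have "\<dots> = (\<Sum>i<k. (if n = s i then 1 else 0) - (if n = s (Suc i mod k) then (1::real) else 0))"
      using finA[OF n] inA1 inA2 neq by (intro sum.cong refl) (auto simp: sum_delta1)
    also have "\<dots> = 0"
      using sum_rot[OF k0, of "\<lambda>i. if n = s i then (1::real) else 0"] by (simp add: sum_subtractf)
    finally show ?thesis .
  qed
  have ni: "net_import \<Omega> q' n = net_import \<Omega> q n" if "n \<in> N" for n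
    using dsum[OF that] unfolding net_import_def q'_def A_def[symmetric]
    by (simp add: sum.distrib sum_distrib_left[symmetric] A_def)
  have feas: "feasible N \<Omega> Dlo Dhi Glo Ghi \<kappa> \<Delta>G D G q" using opt unfolding optimal_P_def by blast
  have dasym: "\<delta> n m = - \<delta> m n" for m n
  proof -
    have "- \<delta> m n = (\<Sum>i<k. - ((if m = s (Suc i mod k) \<and> n = s i then 1 else 0)
                            - (if m = s i \<and> n = s (Suc i mod k) then (1::real) else 0)))"
      unfolding dl by (simp only: sum_negf)
    also have "\<dots> = \<delta> n m" unfolding dl by (intro sum.cong refl) (simp add: conj_commute)
    finally show ?thesis by simp
  qed
  have feas': "feasible N \<Omega> Dlo Dhi Glo Ghi \<kappa> \<Delta>G D G q'"
    unfolding feasible_def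
  proof (intro ballI conjI)
    fix n assume n: "n \<in> N"
    have F: "Dlo n \<le> D n \<and> D n \<le> Dhi n \<and> Glo n \<le> G n \<and> G n \<le> Ghi n
          \<and> (\<forall>m\<in>\<Omega> n - {n}. q m n \<le> \<kappa> m n \<and> q m n + q n m \<le> 0)
          \<and> D n = G n + \<Delta>G n + net_import \<Omega> q n"
      using feas n unfolding feasible_def by blast
    then show "Dlo n \<le> D n" "D n \<le> Dhi n" "Glo n \<le> G n" "G n \<le> Ghi n" by simp_all
    show "D n = G n + \<Delta>G n + net_import \<Omega> q' n" using F ni[OF n] by simp
    fix m assume m: "m \<in> \<Omega> n - {n}"
    have "q' m n + q' n m = q m n + q n m"
      unfolding q'_def using dasym[of n m] by (simp add: algebra_simps)
    moreover have "q m n + q n m \<le> 0" using F m by blast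
    ultimately show "q' m n + q' n m \<le> 0" by linarith
    show "q' m n \<le> \<kappa> m n" using cap[OF n m] unfolding q'_def by simp
  qed
  define S where "S = (\<Sum>i<k. c (s i) (s (Suc i mod k)) - c (s (Suc i mod k)) (s i))"
  have tc: "(\<Sum>n\<in>N. \<Sum>m\<in>A n. c n m * \<delta> m n) = S"
  proof -
    have "(\<Sum>n\<in>N. \<Sum>m\<in>A n. c n m * \<delta> m n)
      = (\<Sum>i<k. (\<Sum>n\<in>N. \<Sum>m\<in>A n. (if m = s (Suc i mod k) \<and> n = s i then c n m else 0))
            - (\<Sum>n\<in>N. \<Sum>m\<in>A n. (if m = s i \<and> n = s (Suc i mod k) then c n m else 0)))"
    proof -
      have "(\<Sum>n\<in>N. \<Sum>m\<in>A n. c n m * \<delta> m n)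
        = (\<Sum>n\<in>N. \<Sum>m\<in>A n. \<Sum>i<k. (if m = s (Suc i mod k) \<and> n = s i then c n m else 0)
            - (if m = s i \<and> n = s (Suc i mod k) then c n m else 0))"
      proof (intro sum.cong refl)
        fix n m
        have "c n m * \<delta> m n = (\<Sum>i<k. c n m * ((if m = s (Suc i mod k) \<and> n = s i then 1 else 0)
                            - (if m = s i \<and> n = s (Suc i mod k) then (1::real) else 0)))"
          unfolding dl by (rule sum_distrib_left)
        also have "\<dots> = (\<Sum>i<k. (if m = s (Suc i mod k) \<and> n = s i then c n m else 0)
            - (if m = s i \<and> n = s (Suc i mod k) then c n m else 0))"
          by (simp only: right_diff_distrib mult_if01)
        finally show "c n m * \<delta> m n = (\<Sum>i<k. (if m = s (Suc i mod k) \<and> n = s i then c n m else 0)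
            - (if m = s i \<and> n = s (Suc i mod k) then c n m else 0))" .
      qed
      also have "\<dots> = (\<Sum>i<k. \<Sum>n\<in>N. \<Sum>m\<in>A n. (if m = s (Suc i mod k) \<and> n = s i then c n m else 0)
            - (if m = s i \<and> n = s (Suc i mod k) then c n m else 0))"
        by (subst sum.swap[of _ N "{..<k}"], rule sum.cong[OF refl], rule sum.swap)
      finally show ?thesis by (simp add: sum_subtractf)
    qed
    also have "\<dots> = S" unfolding S_def
      using finN finA s_in inA1 inA2 k0
      by (intro sum.cong refl) (simp add: sum_delta2)
    finally show ?thesis .
  qed
  have tr: "(\<Sum>n\<in>N. trade_cost \<Omega> c q' n) = (\<Sum>n\<in>N. trade_cost \<Omega> c q n) + t * S"
    unfolding trade_cost_def q'_def A_def[symmetric] using tc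
    by (simp add: distrib_left sum.distrib sum_distrib_left[symmetric] mult.left_commute A_def)
  have "social_welfare N \<Omega> a b d at bt Dstar c D G q' \<le> social_welfare N \<Omega> a b d at bt Dstar c D G q"
    using opt feas' unfolding optimal_P_def by blast
  then show ?thesis using tr unfolding social_welfare_def S_def[symmetric]
    by (simp add: sum_subtractf)
qed

lemma if01_le: "(if A then 1 else 0) - (if B then 1 else (0::real)) \<le> 1" by simp
lemma if01_ge: "-1 \<le> (if A then 1 else 0) - (if B then 1 else (0::real))" by simp
lemma if01_np: "\<not> A \<Longrightarrow> (if A then 1 else 0) - (if B then 1 else (0::real)) \<le> 0" by simp
lemma if01_nn: "\<not> B \<Longrightarrow> (if A then 1 else 0) - (if B then 1 else (0::real)) \<ge> 0" by simp

lemma delta_facts: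
  fixes s :: "nat \<Rightarrow> 'a" and k :: nat
  defines "\<delta> \<equiv> (\<lambda>m n. \<Sum>i<k. (if m = s (Suc i mod k) \<and> n = s i then 1 else 0)
                            - (if m = s i \<and> n = s (Suc i mod k) then (1::real) else 0))"
  shows "\<delta> m n \<le> real k" "- real k \<le> \<delta> m n"
    "\<delta> m n > 0 \<Longrightarrow> \<exists>i<k. m = s (Suc i mod k) \<and> n = s i"
    "\<delta> m n < 0 \<Longrightarrow> \<exists>i<k. m = s i \<and> n = s (Suc i mod k)"
proof -
  have "\<delta> m n \<le> of_nat (card {..<k}) * 1" unfolding \<delta>_def
    by (rule sum_bounded_above) (rule if01_le)
  then show "\<delta> m n \<le> real k" by simp
  have "of_nat (card {..<k}) * (-1) \<le> \<delta> m n" unfolding \<delta>_def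
    by (rule sum_bounded_below) (rule if01_ge)
  then show "- real k \<le> \<delta> m n" by simp
  show "\<delta> m n > 0 \<Longrightarrow> \<exists>i<k. m = s (Suc i mod k) \<and> n = s i"
  proof (rule ccontr)
    assume a: "\<delta> m n > 0" and b: "\<not> (\<exists>i<k. m = s (Suc i mod k) \<and> n = s i)"
    have "\<delta> m n \<le> 0" unfolding \<delta>_def
    proof (rule sum_nonpos)
      fix i assume "i \<in> {..<k}"
      then show "(if m = s (Suc i mod k) \<and> n = s i then 1 else 0)
                            - (if m = s i \<and> n = s (Suc i mod k) then (1::real) else 0) \<le> 0"
        using b by (intro if01_np) blast
    qed
    then show False using a by simp
  qed
  show "\<delta> m n < 0 \<Longrightarrow> \<exists>i<k. m = s i \<and> n = s (Suc i mod k)"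
  proof (rule ccontr)
    assume a: "\<delta> m n < 0" and b: "\<not> (\<exists>i<k. m = s i \<and> n = s (Suc i mod k))"
    have "\<delta> m n \<ge> 0" unfolding \<delta>_def
    proof (rule sum_nonneg)
      fix i assume "i \<in> {..<k}"
      then show "(if m = s (Suc i mod k) \<and> n = s i then 1 else 0)
                            - (if m = s i \<and> n = s (Suc i mod k) then (1::real) else 0) \<ge> 0"
        using b by (intro if01_nn) blast
    qed
    then show False using a by simp
  qed
qed

theorem proposition5:
  fixes N :: "'a set" and root :: 'a and \<Omega> :: "'a \<Rightarrow> 'a set"
    and Dlo Dhi Glo Ghi \<Delta>G a b d at bt Dstar :: "'a \<Rightarrow> real"
    and \<kappa> c :: "'a \<Rightarrow> 'a \<Rightarrow> real"
    and s :: "nat \<Rightarrow> 'a" and k :: nat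
  assumes finN: "finite N"
    and root: "root \<in> N"
    and Omega_sub: "\<And>n. n \<in> N \<Longrightarrow> \<Omega> n \<subseteq> N"
    and Omega_refl: "\<And>n. n \<in> N \<Longrightarrow> n \<in> \<Omega> n"
    and Omega_sym: "\<And>n m. n \<in> N \<Longrightarrow> m \<in> N \<Longrightarrow> m \<in> \<Omega> n \<longleftrightarrow> n \<in> \<Omega> m"
    and Omega_root: "\<And>n. n \<in> N \<Longrightarrow> root \<in> \<Omega> n"
    and Dbounds: "\<And>n. n \<in> N \<Longrightarrow> 0 \<le> Dlo n \<and> Dlo n \<le> Dhi n"
    and Gbounds: "\<And>n. n \<in> N \<Longrightarrow> 0 \<le> Glo n \<and> Glo n \<le> Ghi n"
    and kappa_nonneg: "\<And>n m. n \<in> N \<Longrightarrow> m \<in> N \<Longrightarrow> 0 \<le> \<kappa> n m"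
    and kappa_sym: "\<And>n m. n \<in> N \<Longrightarrow> m \<in> N \<Longrightarrow> \<kappa> n m = \<kappa> m n"
    and pos: "\<And>n. n \<in> N \<Longrightarrow> a n > 0 \<and> b n > 0 \<and> d n > 0 \<and> at n > 0 \<and> bt n > 0"
    and c_pos: "\<And>n m. n \<in> N \<Longrightarrow> m \<in> N \<Longrightarrow> c n m > 0"
    and k_gt: "k > 2"
    and s_in: "\<And>i. i < k \<Longrightarrow> s i \<in> N"
    and s_distinct: "inj_on s {..<k}"
    and s_adj: "\<And>i. i < k \<Longrightarrow> s (Suc i mod k) \<in> \<Omega> (s i)"
  shows
    "((\<Sum>i<k. c (s i) (s (Suc i mod k)) - c (s (Suc i mod k)) (s i)) < 0 \<longrightarrow>
        (\<forall>D G q. optimal_P N \<Omega> Dlo Dhi Glo Ghi \<kappa> \<Delta>G a b d at bt Dstar c D G q \<longrightarrow>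
           (\<exists>i<k. q (s (Suc i mod k)) (s i) = \<kappa> (s (Suc i mod k)) (s i))))
     \<and>
     ((\<Sum>i<k. c (s i) (s (Suc i mod k)) - c (s (Suc i mod k)) (s i)) > 0 \<longrightarrow>
        (\<forall>D G q. optimal_P N \<Omega> Dlo Dhi Glo Ghi \<kappa> \<Delta>G a b d at bt Dstar c D G q \<longrightarrow>
           (\<exists>i<k. q (s i) (s (Suc i mod k)) = \<kappa> (s i) (s (Suc i mod k)))))"
proof -
  define \<delta> where "\<delta> = (\<lambda>m n. \<Sum>i<k. (if m = s (Suc i mod k) \<and> n = s i then 1 else 0)
                            - (if m = s i \<and> n = s (Suc i mod k) then (1::real) else 0))"
  have df1: "\<delta> m n \<le> real k" for m n unfolding \<delta>_def by (rule delta_facts)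
  have df2: "- real k \<le> \<delta> m n" for m n unfolding \<delta>_def by (rule delta_facts)
  have df3: "\<delta> m n > 0 \<Longrightarrow> \<exists>i<k. m = s (Suc i mod k) \<and> n = s i" for m n
    unfolding \<delta>_def by (rule delta_facts)
  have df4: "\<delta> m n < 0 \<Longrightarrow> \<exists>i<k. m = s i \<and> n = s (Suc i mod k)" for m n
    unfolding \<delta>_def by (rule delta_facts)
  define S where "S = (\<Sum>i<k. c (s i) (s (Suc i mod k)) - c (s (Suc i mod k)) (s i))"
  have k0: "k > 0" using k_gt by simp
  have kpos: "real k > 0" using k0 by simp
  have neq: "s (Suc i mod k) \<noteq> s i" if "i < k" for i
  proof
    assume "s (Suc i mod k) = s i"
    then have "Suc i mod k = i" using s_distinct that k0 by (auto dest: inj_onD)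
    moreover have "Suc i < k \<or> Suc i = k" using that by linarith
    ultimately show False using k_gt by auto
  qed
  have sin1: "s (Suc i mod k) \<in> N" for i using s_in k0 by simp
  have inA1: "s (Suc i mod k) \<in> \<Omega> (s i) - {s i}" if "i < k" for i
    using s_adj[OF that] neq[OF that] by auto
  have inA2: "s i \<in> \<Omega> (s (Suc i mod k)) - {s (Suc i mod k)}" if "i < k" for i
    using s_adj[OF that] neq[OF that] Omega_sym[OF s_in[OF that] sin1[of i]] by auto
  have P: "t * S \<ge> 0"
    if opt: "optimal_P N \<Omega> Dlo Dhi Glo Ghi \<kappa> \<Delta>G a b d at bt Dstar c D G q"
      and cap: "\<And>n m. n \<in> N \<Longrightarrow> m \<in> \<Omega> n - {n} \<Longrightarrow> q m n + t * \<delta> m n \<le> \<kappa> m n"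
    for D G q t
    using perturb[OF finN Omega_sub Omega_sym k_gt s_in s_distinct s_adj opt \<delta>_def cap] unfolding S_def .
  have qle: "q m n \<le> \<kappa> m n"
    if opt: "optimal_P N \<Omega> Dlo Dhi Glo Ghi \<kappa> \<Delta>G a b d at bt Dstar c D G q"
      and "n \<in> N" "m \<in> \<Omega> n - {n}" for D G q n m
    using opt that unfolding optimal_P_def feasible_def by blast
  show ?thesis
  proof (intro conjI impI allI)
    fix D G q
    assume Sneg: "(\<Sum>i<k. c (s i) (s (Suc i mod k)) - c (s (Suc i mod k)) (s i)) < 0"
      and opt: "optimal_P N \<Omega> Dlo Dhi Glo Ghi \<kappa> \<Delta>G a b d at bt Dstar c D G q"
    show "\<exists>i<k. q (s (Suc i mod k)) (s i) = \<kappa> (s (Suc i mod k)) (s i)"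
    proof (rule ccontr)
      assume H: "\<not> ?thesis"
      define sl where "sl = (\<lambda>i. \<kappa> (s (Suc i mod k)) (s i) - q (s (Suc i mod k)) (s i))"
      have slpos: "sl i > 0" if "i < k" for i
        using H that qle[OF opt s_in[OF that] inA1[OF that]] unfolding sl_def by force
      define e where "e = Min (sl ` {..<k}) / real k"
      have Mpos: "Min (sl ` {..<k}) > 0" using slpos k0 by (subst Min_gr_iff) auto
      have epos: "e > 0" unfolding e_def using Mpos kpos by simp
      have "e * S \<ge> 0"
      proof (rule P[OF opt])
        fix n m assume n: "n \<in> N" and m: "m \<in> \<Omega> n - {n}"
        show "q m n + e * \<delta> m n \<le> \<kappa> m n"
        proof (cases "\<delta> m n > 0")
          case True
          then obtain i where i: "i < k" "m = s (Suc i mod k)" "n = s i" using df3 by blast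
          have "e * \<delta> m n \<le> e * real k" using df1 epos by (simp add: mult_left_mono)
          also have "\<dots> = Min (sl ` {..<k})" unfolding e_def using kpos by simp
          also have "\<dots> \<le> sl i" using i by (intro Min_le) auto
          finally show ?thesis using i unfolding sl_def by simp
        next
          case False
          then have "e * \<delta> m n \<le> 0" using epos by (simp add: mult_nonneg_nonpos)
          then show ?thesis using qle[OF opt n m] by simp
        qed
      qed
      then show False using epos Sneg unfolding S_def by (simp add: zero_le_mult_iff)
    qed
  next
    fix D G q
    assume Spos: "(\<Sum>i<k. c (s i) (s (Suc i mod k)) - c (s (Suc i mod k)) (s i)) > 0"
      and opt: "optimal_P N \<Omega> Dlo Dhi Glo Ghi \<kappa> \<Delta>G a b d at bt Dstar c D G q"
    show "\<exists>i<k. q (s i) (s (Suc i mod k)) = \<kappa> (s i) (s (Suc i mod k))"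
    proof (rule ccontr)
      assume H: "\<not> ?thesis"
      define sl where "sl = (\<lambda>i. \<kappa> (s i) (s (Suc i mod k)) - q (s i) (s (Suc i mod k)))"
      have slpos: "sl i > 0" if "i < k" for i
        using H that qle[OF opt sin1[of i] inA2[OF that]] unfolding sl_def by force
      define e where "e = Min (sl ` {..<k}) / real k"
      have Mpos: "Min (sl ` {..<k}) > 0" using slpos k0 by (subst Min_gr_iff) auto
      have epos: "e > 0" unfolding e_def using Mpos kpos by simp
      have "(- e) * S \<ge> 0"
      proof (rule P[OF opt])
        fix n m assume n: "n \<in> N" and m: "m \<in> \<Omega> n - {n}"
        show "q m n + (- e) * \<delta> m n \<le> \<kappa> m n"
        proof (cases "\<delta> m n < 0")
          case True
          then obtain i where i: "i < k" "m = s i" "n = s (Suc i mod k)" using df4 by blast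
          have "(- e) * \<delta> m n = e * (- \<delta> m n)" by simp
          also have "\<dots> \<le> e * real k" using df2[of m n] epos by (intro mult_left_mono) linarith+
          also have "\<dots> = Min (sl ` {..<k})" unfolding e_def using kpos by simp
          also have "\<dots> \<le> sl i" using i by (intro Min_le) auto
          finally show ?thesis using i unfolding sl_def by simp
        next
          case False
          then have "(- e) * \<delta> m n \<le> 0" using epos by (simp add: mult_nonpos_nonneg)
          then show ?thesis using qle[OF opt n m] by simp
        qed
      qed
      then show False using epos Spos mult_pos_pos[of e S] unfolding S_def by linarith
    qed
  qed
qed

end
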